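(* Let $\mathcal{X}$ be a finite alphabet with $|\mathcal{X}|=q$, $P_0,P_1$ probability mass functions on $\mathcal{X}$ with the same support $\mathcal{X}$, $\varepsilon>0$, $n>1$, $k^\star\in(1,n]$, and $\mathcal{D}=(x_1,\dots,x_n)$ with independent entries, $x_1,\dots,x_{k^\star-1}\sim P_0$, $x_{k^\star},\dots,x_n\sim P_1$. Let the Offline RR-CPD estimator privatize each $x_i$ by randomized response $W^r$ to $y_i$, set $Q_j(y)=\sum_xP_j(x)W^r(y|x)$, and output $\hat k\in\arg\max_{k\in[n]}\sum_{i=k}^n\log\frac{Q_1(y_i)}{Q_0(y_i)}$. Then for any $\alpha\in[n]$ the estimator is $(\alpha,\beta_r)$-accurate with $$\beta_r\le2\min\Big\{\frac{t_r(1-t_r^M)}{1-t_r};\ \Big(1-\frac{C_r}{2}\Big)^{\alpha/2}\Big\},$$ where $t_r=\exp(-\alpha C_r^2/s_r^2)$, $M=\lfloor\frac{n-1}{\alpha}\rfloor$, $s_r=\min\{2\varepsilon;\tanh(\varepsilon/2)s\}$, $C_r=2\big(\frac{e^\varepsilon-1}{e^\varepsilon+q-1}\big)^2d^2_{\mathrm{TV}}(P_0,P_1)$ and $s=\max_x\log\frac{P_1(x)}{P_0(x)}-\min_x\log\frac{P_1(x)}{P_0(x)}$.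
   Context: Randomized response: $W^r(y|x)=\frac{e^\varepsilon}{e^\varepsilon+q-1}$ if $y=x$ and $\frac{1}{e^\varepsilon+q-1}$ otherwise. $(\alpha,\beta)$-accurate means $\mathbb{P}\{\hat k\notin[k^\star-\alpha,k^\star+\alpha]\}=\beta$. $d_{\mathrm{TV}}(P_0,P_1)=\frac12\sum_x|P_0(x)-P_1(x)|$; $\tanh(\varepsilon/2)=\frac{e^\varepsilon-1}{e^\varepsilon+1}$. *)

theory Defs
  imports "HOL-Probability.Probability"
begin

definition rr_W :: "real \<Rightarrow> 'a::finite \<Rightarrow> 'a \<Rightarrow> real" where
  "rr_W eps y x = (if y = x then exp eps / (exp eps + real CARD('a) - 1)
                    else 1 / (exp eps + real CARD('a) - 1))"

definition rr_pmf :: "real \<Rightarrow> 'a::finite \<Rightarrow> 'a pmf" where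
  "rr_pmf eps x = embed_pmf (\<lambda>y. rr_W eps y x)"

definition rr_Q :: "real \<Rightarrow> 'a::finite pmf \<Rightarrow> 'a \<Rightarrow> real" where
  "rr_Q eps P y = (\<Sum>x\<in>UNIV. pmf P x * rr_W eps y x)"

definition tv_dist :: "'a::finite pmf \<Rightarrow> 'a pmf \<Rightarrow> real" where
  "tv_dist P0 P1 = (1/2) * (\<Sum>x\<in>UNIV. \<bar>pmf P0 x - pmf P1 x\<bar>)"

definition llr_range :: "'a::finite pmf \<Rightarrow> 'a pmf \<Rightarrow> real" where
  "llr_range P0 P1 = Max ((\<lambda>x. ln (pmf P1 x / pmf P0 x)) ` UNIV)
                    - Min ((\<lambda>x. ln (pmf P1 x / pmf P0 x)) ` UNIV)"

definition rr_data :: "real \<Rightarrow> 'a::finite pmf \<Rightarrow> 'a pmf \<Rightarrow> nat \<Rightarrow> nat \<Rightarrow> (nat \<Rightarrow> 'a \<times> 'a) pmf" where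
  "rr_data eps P0 P1 n kstar =
     Pi_pmf {1..n} undefined
       (\<lambda>i. bind_pmf (if i < kstar then P0 else P1)
               (\<lambda>x. map_pmf (\<lambda>y. (x, y)) (rr_pmf eps x)))"

definition rr_stat :: "real \<Rightarrow> 'a::finite pmf \<Rightarrow> 'a pmf \<Rightarrow> nat \<Rightarrow> (nat \<Rightarrow> 'a) \<Rightarrow> nat \<Rightarrow> real" where
  "rr_stat eps P0 P1 n y k = (\<Sum>i=k..n. ln (rr_Q eps P1 (y i) / rr_Q eps P0 (y i)))"

end

theory Submission imports Defs begin

lemma ln_lower:
  fixes z :: real assumes "1 \<le> z"
  shows "2 * (z - 1) / (z + 1) \<le> ln z"
proof -
  define f where "f = (\<lambda>x::real. ln x - 2 * (x - 1) / (x + 1))"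
  have "f 1 \<le> f z"
  proof (rule DERIV_nonneg_imp_increasing_open[OF assms])
    fix x :: real assume x: "1 < x" "x < z"
    have "DERIV f x :> (1 / x - 4 / (x + 1)^2)"
      unfolding f_def using x
      by (auto intro!: derivative_eq_intros simp: field_simps power2_eq_square)
    moreover have "1 / x - 4 / (x + 1)^2 = (x - 1)^2 / (x * (x+1)^2)"
      using x by (simp add: divide_simps power2_eq_square) (simp add: algebra_simps)
    moreover have "(x - 1)^2 / (x * (x+1)^2) \<ge> 0" using x by simp
    ultimately show "\<exists>y. DERIV f x :> y \<and> y \<ge> 0" by auto
  next
    show "continuous_on {1..z} f" unfolding f_def
      by (auto intro!: continuous_intros)
  qed
  then show ?thesis by (simp add: f_def)
qed

lemma tanh_half: "tanh ((e::real) / 2) = (exp e - 1) / (exp e + 1)"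
proof -
  have "tanh (e/2) = (1 - exp (-e)) / (1 + exp (-e))" by (simp add: tanh_real_altdef)
  also have "\<dots> = (exp e - 1) / (exp e + 1)"
    by (simp add: exp_minus divide_simps)
  finally show ?thesis .
qed

lemma tanh_half_le: assumes "(e::real) \<ge> 0" shows "(exp e - 1) / (exp e + 1) \<le> e / 2"
proof -
  have "2 * (exp e - 1) / (exp e + 1) \<le> ln (exp e)" by (rule ln_lower) (use assms in simp)
  then show ?thesis by (simp add: field_simps)
qed

lemma rr_W_sum:
  assumes "eps > 0"
  shows "(\<Sum>y\<in>UNIV. rr_W eps y (x::'a::finite)) = 1"
proof -
  have "(\<Sum>y\<in>UNIV. rr_W eps y x) = rr_W eps x x + (\<Sum>y\<in>UNIV - {x}. rr_W eps y x)"
    by (simp add: sum.remove)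
  also have "\<dots> = exp eps / (exp eps + real CARD('a) - 1) + real (CARD('a) - 1) / (exp eps + real CARD('a) - 1)"
    by (simp add: rr_W_def card_Diff_singleton)
  also have "\<dots> = 1"
  proof -
    have "CARD('a) \<ge> 1" by (simp add: Suc_leI)
    moreover have "exp eps > 1" using assms by simp
    ultimately have "exp eps + real CARD('a) - 1 > 0" by linarith
    moreover have "exp eps / (exp eps + real CARD('a) - 1) + real (CARD('a) - 1) / (exp eps + real CARD('a) - 1)
      = (exp eps + real (CARD('a) - 1)) / (exp eps + real CARD('a) - 1)" by (simp add: add_divide_distrib)
    moreover have "exp eps + real (CARD('a) - 1) = exp eps + real CARD('a) - 1"
      using \<open>CARD('a) \<ge> 1\<close> by (simp add: of_nat_diff)
    ultimately show ?thesis by simp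
  qed
  finally show ?thesis .
qed

lemma rr_W_pos: assumes "eps > 0" shows "rr_W eps y (x::'a::finite) > 0"
proof -
  have "CARD('a) \<ge> 1" by (simp add: Suc_leI)
  moreover have "exp eps > 1" using assms by simp
  ultimately have "exp eps + real CARD('a) - 1 > 0" by linarith
  then show ?thesis by (simp add: rr_W_def)
qed

lemma pmf_rr: assumes "eps > 0" shows "pmf (rr_pmf eps x) y = rr_W eps y (x::'a::finite)"
  unfolding rr_pmf_def
proof (rule pmf_embed_pmf)
  show "0 \<le> rr_W eps y x" for y using less_imp_le[OF rr_W_pos[OF assms]] by blast
  have "(\<Sum>y\<in>UNIV. ennreal (rr_W eps y (x::'a))) = ennreal (\<Sum>y\<in>UNIV. rr_W eps y x)"
    by (rule sum_ennreal) (simp add: less_imp_le[OF rr_W_pos[OF assms]])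
  then show "(\<integral>\<^sup>+ y. ennreal (rr_W eps y x) \<partial>count_space UNIV) = 1"
    by (simp add: nn_integral_count_space_finite rr_W_sum[OF assms])
qed

lemma pmf_Qp: assumes "eps > 0"
  shows "pmf (bind_pmf P (rr_pmf eps)) y = rr_Q eps P (y::'a::finite)"
  by (simp add: pmf_bind rr_Q_def pmf_rr[OF assms] integral_measure_pmf_real[where A=UNIV] mult.commute)

lemma rr_Q_pos: assumes "eps > 0" shows "rr_Q eps P (y::'a::finite) > 0"
proof -
  obtain x0 where x0: "x0 \<in> set_pmf P" using set_pmf_not_empty by fast
  have "0 < pmf P x0 * rr_W eps y x0" by (intro mult_pos_pos pmf_positive x0 rr_W_pos assms)
  also have "\<dots> \<le> rr_Q eps P y" unfolding rr_Q_def
    by (rule member_le_sum) (auto intro!: mult_nonneg_nonneg simp: less_imp_le[OF rr_W_pos[OF assms]])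
  finally show ?thesis .
qed

lemma prob_bind_pmf:
  "measure_pmf.prob (bind_pmf M N) X = measure_pmf.expectation M (\<lambda>x. measure_pmf.prob (N x) X)"
proof -
  have "emeasure (measure_pmf (bind_pmf M N)) X = (\<integral>\<^sup>+x. emeasure (N x) X \<partial>M)" by simp
  also have "\<dots> = (\<integral>\<^sup>+x. ennreal (measure_pmf.prob (N x) X) \<partial>M)"
    by (simp add: measure_pmf.emeasure_eq_measure)
  also have "\<dots> = ennreal (measure_pmf.expectation M (\<lambda>x. measure_pmf.prob (N x) X))"
    by (rule nn_integral_eq_integral)
       (auto intro!: measure_pmf.integrable_const_bound[where B=1])
  finally show ?thesis
    by (simp add: measure_pmf.emeasure_eq_measure)
qed

lemma prob_pair_pmf:
  "measure_pmf.prob (pair_pmf A B) S = measure_pmf.expectation A (\<lambda>x. measure_pmf.prob B {y. (x,y) \<in> S})"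
proof -
  have "pair_pmf A B = bind_pmf A (\<lambda>x. map_pmf (Pair x) B)"
    by (simp add: pair_pmf_def map_pmf_def)
  then show ?thesis by (simp add: prob_bind_pmf vimage_def)
qed

lemma ville:
  fixes p :: "nat \<Rightarrow> 'b::finite pmf" and Z :: "'b \<Rightarrow> real"
  assumes Znn: "\<And>z. 0 \<le> Z z" and rho: "0 \<le> \<rho>" "\<rho> \<le> 1"
  and EZ: "\<And>i. i \<in> set is \<Longrightarrow> (\<Sum>z\<in>UNIV. pmf (p i) z * Z z) \<le> \<rho>"
  and "finite A" "set is \<subseteq> A" "distinct is" "0 \<le> c"
  shows "measure_pmf.prob (Pi_pmf A d p)
           {f. \<exists>m. a \<le> m \<and> m \<le> length is \<and> 1 \<le> c * (\<Prod>j<m. Z (f (is!j)))} \<le> c * \<rho>^a"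
  using assms(4-)
proof (induction "is" arbitrary: A a c)
  case Nil
  show ?case
  proof (cases "a = 0 \<and> 1 \<le> c")
    case True
    have "measure_pmf.prob (Pi_pmf A d p) {f. \<exists>m. a \<le> m \<and> m \<le> length [] \<and> 1 \<le> c * (\<Prod>j<m. Z (f ([]!j)))} \<le> 1"
      by (rule measure_pmf.prob_le_1)
    then show ?thesis using True by simp
  next
    case False
    then have "{f. \<exists>m. a \<le> m \<and> m \<le> length [] \<and> 1 \<le> c * (\<Prod>j<m. Z (f ([]!j)))} = {}" by auto
    then show ?thesis using rho Nil by simp
  qed
next
  case (Cons i "is")
  define A' where "A' = A - {i}"
  have A: "A = insert i A'" "i \<notin> A'" "finite A'" "set is \<subseteq> A'"
    using Cons.prems by (auto simp: A'_def)
  define E where "E = {f. \<exists>m. a \<le> m \<and> m \<le> length (i#is) \<and> 1 \<le> c * (\<Prod>j<m. Z (f ((i#is)!j)))}"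
  have "measure_pmf.prob (Pi_pmf A d p) E \<le> c * \<rho>^a"
  proof (cases "a = 0 \<and> 1 \<le> c")
    case True
    have "measure_pmf.prob (Pi_pmf A d p) E \<le> 1"
      by (rule measure_pmf.prob_le_1)
    also have "1 \<le> c * \<rho>^a" using True by simp
    finally show ?thesis .
  next
    case False
    define F where "F = (\<lambda>z. {f. \<exists>m. a-1 \<le> m \<and> m \<le> length is \<and> 1 \<le> (c * Z z) * (\<Prod>j<m. Z (f (is!j)))})"
    have IH: "measure_pmf.prob (Pi_pmf A' d p) (F z) \<le> (c * Z z) * \<rho>^(a-1)" for z
      unfolding F_def
      using Cons.IH[where A=A' and a="a-1" and c="c * Z z"] Cons.prems A Znn[of z] EZ by auto
    have sub: "{f. f(i:=z) \<in> E} \<subseteq> F z" for z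
    proof
      fix f assume "f \<in> {f. f(i:=z) \<in> E}"
      then obtain m where m: "a \<le> m" "m \<le> Suc (length is)"
        "1 \<le> c * (\<Prod>j<m. Z ((f(i:=z)) ((i#is)!j)))" by (auto simp: E_def)
      have "m \<noteq> 0" using m False by (cases "m = 0") auto
      then obtain m' where m': "m = Suc m'" by (cases m) auto
      have "(\<Prod>j<m. Z ((f(i:=z)) ((i#is)!j))) = Z z * (\<Prod>j<m'. Z (f (is!j)))"
      proof -
        have "(\<Prod>j<m. Z ((f(i:=z)) ((i#is)!j))) = Z z * (\<Prod>j<m'. Z ((f(i:=z)) (is!j)))"
          unfolding m' prod.lessThan_Suc_shift by simp
        also have "(\<Prod>j<m'. Z ((f(i:=z)) (is!j))) = (\<Prod>j<m'. Z (f (is!j)))"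
        proof (rule prod.cong)
          fix j assume "j \<in> {..<m'}"
          then have "j < length is" using m m' by auto
          then have "is ! j \<noteq> i" using Cons.prems by (auto dest: nth_mem)
          then show "Z ((f(i:=z)) (is!j)) = Z (f (is!j))" by simp
        qed simp
        finally show ?thesis .
      qed
      then show "f \<in> F z" unfolding F_def using m m' by (auto simp: mult.assoc intro!: exI[of _ m'])
    qed
    have "measure_pmf.prob (Pi_pmf A d p) E
        = measure_pmf.prob (pair_pmf (p i) (Pi_pmf A' d p)) ((\<lambda>(y,f). f(i:=y)) -` E)"
      unfolding A(1) using A by (simp add: Pi_pmf_insert)
    also have "\<dots> = measure_pmf.expectation (p i) (\<lambda>z. measure_pmf.prob (Pi_pmf A' d p) {f. f(i:=z) \<in> E})"
      by (simp add: prob_pair_pmf)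
    also have "\<dots> = (\<Sum>z\<in>UNIV. measure_pmf.prob (Pi_pmf A' d p) {f. f(i:=z) \<in> E} * pmf (p i) z)"
      by (rule integral_measure_pmf_real) auto
    also have "\<dots> \<le> (\<Sum>z\<in>UNIV. (c * Z z * \<rho>^(a-1)) * pmf (p i) z)"
    proof (rule sum_mono)
      fix z
      have "measure_pmf.prob (Pi_pmf A' d p) {f. f(i:=z) \<in> E} \<le> measure_pmf.prob (Pi_pmf A' d p) (F z)"
        by (rule measure_pmf.finite_measure_mono[OF sub]) simp
      also have "\<dots> \<le> c * Z z * \<rho>^(a-1)" using IH by simp
      finally show "measure_pmf.prob (Pi_pmf A' d p) {f. f(i:=z) \<in> E} * pmf (p i) z \<le> (c * Z z * \<rho>^(a-1)) * pmf (p i) z"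
        by (rule mult_right_mono) simp
    qed
    also have "\<dots> = c * \<rho>^(a-1) * (\<Sum>z\<in>UNIV. pmf (p i) z * Z z)"
      by (simp add: sum_distrib_left mult_ac)
    also have "\<dots> \<le> c * \<rho>^(a-1) * \<rho>"
      by (rule mult_left_mono) (use EZ[of i] Cons.prems rho in auto)
    also have "\<dots> \<le> c * \<rho>^a"
    proof (cases a)
      case 0
      then show ?thesis using rho Cons.prems by (simp add: mult_left_le)
    next
      case (Suc b)
      then show ?thesis by (simp add: mult_ac)
    qed
    finally show ?thesis .
  qed
  then show ?case by (simp only: E_def)
qed

lemma data_snd:
  fixes P0 P1 :: "'a::finite pmf"
  shows "map_pmf (\<lambda>\<omega>. snd \<circ> \<omega>) (rr_data eps P0 P1 n kstar) =
     Pi_pmf {1..n} (snd (undefined :: 'a \<times> 'a)) (\<lambda>i. bind_pmf (if i < kstar then P0 else P1) (rr_pmf eps))"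
proof -
  have "map_pmf (\<lambda>\<omega>. snd \<circ> \<omega>) (rr_data eps P0 P1 n kstar) =
     Pi_pmf {1..n} (snd (undefined :: 'a \<times> 'a)) (\<lambda>i. map_pmf snd (bind_pmf (if i < kstar then P0 else P1)
               (\<lambda>x. map_pmf (\<lambda>y. (x, y)) (rr_pmf eps x))))"
    unfolding rr_data_def by (rule Pi_pmf_map[symmetric]) auto
  also have "\<dots> = Pi_pmf {1..n} (snd (undefined :: 'a \<times> 'a)) (\<lambda>i. bind_pmf (if i < kstar then P0 else P1) (rr_pmf eps))"
    by (rule Pi_pmf_cong) (auto simp: map_bind_pmf pmf.map_comp o_def)
  finally show ?thesis .
qed

lemma bc_tv:
  fixes Q0 Q1 :: "'a::finite \<Rightarrow> real"
  assumes "\<And>y. 0 \<le> Q0 y" "\<And>y. 0 \<le> Q1 y" "sum Q0 UNIV = 1" "sum Q1 UNIV = 1"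
  shows "(\<Sum>y\<in>UNIV. sqrt (Q0 y * Q1 y))^2 \<le> 1 - ((1/2) * (\<Sum>y\<in>UNIV. \<bar>Q0 y - Q1 y\<bar>))^2"
proof -
  define B where "B = (\<Sum>y\<in>UNIV. sqrt (Q0 y * Q1 y))"
  have ab: "\<bar>Q0 y - Q1 y\<bar> = \<bar>sqrt (Q0 y) - sqrt (Q1 y)\<bar> * (sqrt (Q0 y) + sqrt (Q1 y))" for y
  proof -
    have "Q0 y - Q1 y = (sqrt (Q0 y) - sqrt (Q1 y)) * (sqrt (Q0 y) + sqrt (Q1 y))"
      using assms(1,2)[of y] by (simp add: algebra_simps)
    then show ?thesis using assms(1,2)[of y] by (simp add: abs_mult abs_of_nonneg)
  qed
  have "(\<Sum>y\<in>UNIV. \<bar>Q0 y - Q1 y\<bar>)^2 \<le> (\<Sum>y\<in>UNIV. \<bar>sqrt (Q0 y) - sqrt (Q1 y)\<bar>^2) * (\<Sum>y\<in>UNIV. (sqrt (Q0 y) + sqrt (Q1 y))^2)"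
    unfolding ab by (rule Cauchy_Schwarz_ineq_sum)
  also have "(\<Sum>y\<in>UNIV. \<bar>sqrt (Q0 y) - sqrt (Q1 y)\<bar>^2) = (\<Sum>y\<in>UNIV. Q0 y + Q1 y - 2 * sqrt (Q0 y * Q1 y))"
    using assms(1,2) by (intro sum.cong) (auto simp: power2_eq_square algebra_simps real_sqrt_mult)
  also have "\<dots> = 2 - 2 * B"
    using assms(3,4) by (simp add: B_def sum.distrib sum_subtractf sum_distrib_left)
  also have "(\<Sum>y\<in>UNIV. (sqrt (Q0 y) + sqrt (Q1 y))^2) = (\<Sum>y\<in>UNIV. Q0 y + Q1 y + 2 * sqrt (Q0 y * Q1 y))"
    using assms(1,2) by (intro sum.cong) (auto simp: power2_eq_square algebra_simps real_sqrt_mult)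
  also have "\<dots> = 2 + 2 * B"
    using assms(3,4) by (simp add: B_def sum.distrib sum_distrib_left)
  finally have "(\<Sum>y\<in>UNIV. \<bar>Q0 y - Q1 y\<bar>)^2 \<le> (2 - 2*B) * (2 + 2*B)" .
  then show ?thesis unfolding B_def[symmetric] by (simp add: power2_eq_square algebra_simps)
qed

lemma rr_Q_formula:
  fixes y :: "'a::finite"
  assumes "eps > 0"
  shows "rr_Q eps P y = (1 + (exp eps - 1) * pmf P y) / (exp eps + real CARD('a) - 1)"
proof -
  define D where "D = exp eps + real CARD('a) - 1"
  have W: "rr_W eps y x = 1 / D + (if x = y then (exp eps - 1) / D else 0)" for x
    by (auto simp: rr_W_def D_def diff_divide_distrib)
  have "rr_Q eps P y = (\<Sum>x\<in>UNIV. pmf P x * (1/D)) + (\<Sum>x\<in>UNIV. pmf P x * (if x = y then (exp eps - 1) / D else 0))"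
    unfolding rr_Q_def W by (simp add: distrib_left sum.distrib)
  also have "(\<Sum>x\<in>UNIV. pmf P x * (1/D)) = 1 / D"
    by (simp add: sum_divide_distrib[symmetric] sum_pmf_eq_1)
  also have "(\<Sum>x\<in>UNIV. pmf P x * (if x = y then (exp eps - 1) / D else 0)) = pmf P y * ((exp eps - 1) / D)"
    by (simp add: if_distrib cong: if_cong)
  finally show ?thesis by (simp add: D_def add_divide_distrib)
qed

lemma frac_mono_aux:
  fixes x x0 :: real assumes "0 \<le> x0" "x0 \<le> x"
  shows "2 * x0 / (2 + x0) \<le> 2 * x / (2 + x)"
  using assms by (simp add: divide_simps) (simp add: algebra_simps)

lemma frac_mono_aux2:
  fixes w w0 :: real assumes "0 \<le> w0" "w0 \<le> w" "w < 1"
  shows "2 * w0 / (2 - w0) \<le> 2 * w / (2 - w)"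
  using assms by (simp add: divide_simps) (simp add: algebra_simps)

lemma recip_aux:
  fixes a b d :: real assumes "a > 0" "b > 0" "a + b = 2" "d \<ge> 0"
  shows "4 * d \<le> 2 * d / a + 2 * d / b"
proof -
  have "a * b \<le> 1"
  proof -
    have "(a - b)^2 \<ge> 0" by simp
    then have "4 * (a * b) \<le> (a + b)^2" by (simp add: power2_eq_square algebra_simps)
    then show ?thesis using assms(3) by simp
  qed
  have bb: "b = 2 - a" using assms by simp
  have "2 * d / a + 2 * d / b = 4 * d / (a * b)"
    using assms(1,2) unfolding bb by (simp add: field_simps)
  also have "4 * d / (a * b) \<ge> 4 * d"
    using assms \<open>a * b \<le> 1\<close> by (simp add: divide_simps mult_left_le)
  finally show ?thesis .
qed

lemma tv_split:
  fixes P0 P1 :: "'a::finite pmf"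
  defines "S \<equiv> {x. pmf P0 x < pmf P1 x}"
  shows "tv_dist P0 P1 = (\<Sum>x\<in>S. pmf P1 x - pmf P0 x)"
    and "tv_dist P0 P1 = (\<Sum>x\<in>-S. pmf P0 x - pmf P1 x)"
proof -
  have tot: "(\<Sum>x\<in>UNIV. pmf P1 x - pmf P0 x) = 0"
    by (simp add: sum_subtractf sum_pmf_eq_1)
  have split1: "(\<Sum>x\<in>UNIV. g x) = (\<Sum>x\<in>S. g x) + (\<Sum>x\<in>-S. g x)" for g :: "'a \<Rightarrow> real"
    using sum.Int_Diff[of UNIV g S] by (simp add: Compl_eq_Diff_UNIV)
  have a: "(\<Sum>x\<in>UNIV. \<bar>pmf P0 x - pmf P1 x\<bar>) = (\<Sum>x\<in>S. pmf P1 x - pmf P0 x) + (\<Sum>x\<in>-S. pmf P0 x - pmf P1 x)"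
    unfolding split1[of "\<lambda>x. \<bar>pmf P0 x - pmf P1 x\<bar>"]
    by (intro arg_cong2[where f="(+)"] sum.cong) (auto simp: S_def)
  have b: "(\<Sum>x\<in>S. pmf P1 x - pmf P0 x) - (\<Sum>x\<in>-S. pmf P0 x - pmf P1 x) = 0"
    using tot unfolding split1[of "\<lambda>x. pmf P1 x - pmf P0 x"] by (simp add: sum_subtractf)
  show "tv_dist P0 P1 = (\<Sum>x\<in>S. pmf P1 x - pmf P0 x)"
    using a b unfolding tv_dist_def by simp
  show "tv_dist P0 P1 = (\<Sum>x\<in>-S. pmf P0 x - pmf P1 x)"
    using a b unfolding tv_dist_def by simp
qed

lemma llr_tv:
  fixes P0 P1 :: "'a::finite pmf"
  assumes s0: "set_pmf P0 = UNIV" and s1: "set_pmf P1 = UNIV"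
  shows "4 * tv_dist P0 P1 \<le> llr_range P0 P1"
proof -
  define r where "r = (\<lambda>x. pmf P1 x / pmf P0 x)"
  define U where "U = Max ((\<lambda>x. ln (r x)) ` UNIV)"
  define L where "L = Min ((\<lambda>x. ln (r x)) ` UNIV)"
  define S where "S = {x. pmf P0 x < pmf P1 x}"
  define d where "d = tv_dist P0 P1"
  define p where "p = (\<Sum>x\<in>S. pmf P0 x)"
  have pos0: "pmf P0 x > 0" for x using s0 by (simp add: pmf_positive)
  have pos1: "pmf P1 x > 0" for x using s1 by (simp add: pmf_positive)
  have nz: "pmf P0 x \<noteq> 0" for x using pos0[of x] by simp
  have rpos: "r x > 0" for x using pos0 pos1 by (simp add: r_def)
  have sdef: "llr_range P0 P1 = U - L" by (simp add: llr_range_def U_def L_def r_def)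
  have Ux: "ln (r x) \<le> U" for x unfolding U_def by (rule Max_ge) auto
  have Lx: "L \<le> ln (r x)" for x unfolding L_def by (rule Min_le) auto
  have ru: "r x \<le> exp U" for x using Ux[of x] rpos[of x] by (metis exp_le_cancel_iff exp_ln)
  have rl: "exp L \<le> r x" for x using Lx[of x] rpos[of x] by (metis exp_le_cancel_iff exp_ln)
  have d1: "d = (\<Sum>x\<in>S. pmf P1 x - pmf P0 x)" unfolding d_def S_def by (rule tv_split(1))
  have d2: "d = (\<Sum>x\<in>-S. pmf P0 x - pmf P1 x)" unfolding d_def S_def by (rule tv_split(2))
  have p1: "(\<Sum>x\<in>-S. pmf P0 x) = 1 - p"
  proof -
    have "(\<Sum>x\<in>UNIV. pmf P0 x) = (\<Sum>x\<in>UNIV \<inter> S. pmf P0 x) + (\<Sum>x\<in>UNIV - S. pmf P0 x)"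
      by (rule sum.Int_Diff) simp
    then show ?thesis by (simp add: p_def sum_pmf_eq_1 Compl_eq_Diff_UNIV)
  qed
  have dU: "d \<le> p * (exp U - 1)"
  proof -
    have "d = (\<Sum>x\<in>S. pmf P0 x * (r x - 1))"
      unfolding d1 r_def by (intro sum.cong) (auto simp: field_simps nz)
    also have "\<dots> \<le> (\<Sum>x\<in>S. pmf P0 x * (exp U - 1))"
      by (intro sum_mono mult_left_mono) (use ru pos0 in \<open>auto intro: less_imp_le\<close>)
    finally show ?thesis by (simp add: p_def sum_distrib_right)
  qed
  have dL: "d \<le> (1 - p) * (1 - exp L)"
  proof -
    have "d = (\<Sum>x\<in>-S. pmf P0 x * (1 - r x))"
      unfolding d2 r_def by (intro sum.cong) (auto simp: field_simps nz)
    also have "\<dots> \<le> (\<Sum>x\<in>-S. pmf P0 x * (1 - exp L))"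
      by (intro sum_mono mult_left_mono) (use rl pos0 in \<open>auto intro: less_imp_le\<close>)
    finally show ?thesis by (simp add: p1[symmetric] sum_distrib_right)
  qed
  have LU: "L \<le> U" using Lx[of undefined] Ux[of undefined] by simp
  show ?thesis
  proof (cases "d > 0")
    case False
    then have "d \<le> 0" by simp
    then show ?thesis using LU sdef d_def by simp
  next
    case True
    have pn: "p \<ge> 0" unfolding p_def by (simp add: sum_nonneg)
    have pn1: "1 - p \<ge> 0" unfolding p1[symmetric] by (simp add: sum_nonneg)
    have "0 < p * (exp U - 1)" using dU True by linarith
    then have pp: "p > 0" and eU': "exp U - 1 > 0" using pn by (auto simp: zero_less_mult_iff)
    have eU: "exp U \<ge> 1" using eU' by simp
    have "0 < (1 - p) * (1 - exp L)" using dL True by linarith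
    then have pp1: "1 - p > 0" and eL': "1 - exp L > 0" using pn1 by (auto simp: zero_less_mult_iff)
    have eL: "exp L < 1" using eL' by simp
    define x where "x = exp U - 1"
    define w where "w = 1 - exp L"
    have x0: "d / p \<le> x" using dU pp by (simp add: x_def divide_simps mult.commute)
    have w0: "d / (1 - p) \<le> w" using dL pp1 by (simp add: w_def divide_simps mult.commute)
    have w1: "w < 1" unfolding w_def by simp
    have hU: "2 * (d/p) / (2 + d/p) \<le> U"
    proof -
      have "2 * (d/p) / (2 + d/p) \<le> 2 * x / (2 + x)"
        by (rule frac_mono_aux) (use x0 True pp in auto)
      also have "\<dots> = 2 * (exp U - 1) / (exp U + 1)" by (simp add: x_def)
      also have "\<dots> \<le> ln (exp U)" by (rule ln_lower[OF eU])
      finally show ?thesis by simp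
    qed
    have hL: "2 * (d/(1-p)) / (2 - d/(1-p)) \<le> - L"
    proof -
      have "2 * (d/(1-p)) / (2 - d/(1-p)) \<le> 2 * w / (2 - w)"
        by (rule frac_mono_aux2) (use w0 w1 True pp1 in auto)
      also have "\<dots> = 2 * (1 / exp L - 1) / (1 / exp L + 1)"
        by (simp add: w_def divide_simps)
      also have "\<dots> \<le> ln (1 / exp L)" by (rule ln_lower) (use eL in \<open>simp add: divide_simps\<close>)
      finally show ?thesis by (simp add: ln_div)
    qed
    have e1: "2 * (d/p) / (2 + d/p) = 2 * d / (2 * p + d)"
      using pp by (simp add: divide_simps)
    have e2: "2 * (d/(1-p)) / (2 - d/(1-p)) = 2 * d / (2 - 2 * p - d)"
      using pp1 by (simp add: divide_simps)
    have dlt: "d < 1 - p"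
    proof -
      have "d / (1-p) < 1" using w0 w1 by simp
      then show ?thesis using pp1 by (simp add: divide_simps)
    qed
    have "4 * d \<le> 2 * d / (2 * p + d) + 2 * d / (2 - 2 * p - d)"
      by (rule recip_aux) (use pp True dlt in auto)
    also have "\<dots> \<le> U - L" using hU hL unfolding e1 e2 by linarith
    finally show ?thesis using sdef d_def by simp
  qed
qed

lemma e1: "x > 0 \<Longrightarrow> exp (ln x / 2) = sqrt (x::real)"
proof -
  assume x: "x > 0"
  have "exp (ln x / 2) = exp ((1/2) * ln x)" by simp
  also have "\<dots> = x powr (1/2)" using x by (simp add: powr_def)
  also have "\<dots> = sqrt x" using x by (simp add: powr_half_sqrt)
  finally show ?thesis .
qed
lemma sqrt_aux:
  fixes a b :: real assumes "a > 0" "b > 0"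
  shows "b * exp (- (ln (b / a)) / 2) = sqrt (a * b)"
    and "a * exp (ln (b / a) / 2) = sqrt (a * b)"
proof -
  have i: "exp (ln (b/a)/2) = sqrt (b/a)" using assms by (intro e1) simp
  have "exp (- (ln (b / a)) / 2) = inverse (exp (ln (b/a) / 2))"
    by (metis exp_minus minus_divide_left)
  then have "b * exp (- (ln (b / a)) / 2) = b * inverse (sqrt (b / a))" unfolding i by simp
  also have "\<dots> = sqrt (a * b)"
    using assms by (simp add: real_sqrt_divide real_sqrt_mult field_simps)
  finally show "b * exp (- (ln (b / a)) / 2) = sqrt (a * b)" .
  have "a * exp (ln (b / a) / 2) = a * sqrt (b / a)" unfolding i ..
  also have "\<dots> = sqrt (a * b)"
    using assms by (simp add: real_sqrt_divide real_sqrt_mult field_simps)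
  finally show "a * exp (ln (b / a) / 2) = sqrt (a * b)" .
qed

lemma card_ge2:
  fixes P0 P1 :: "'a::finite pmf"
  assumes "P0 \<noteq> P1" shows "CARD('a) \<ge> 2"
proof (rule ccontr)
  assume "\<not> CARD('a) \<ge> 2"
  moreover have "CARD('a) \<ge> 1" by (simp add: Suc_leI)
  ultimately have "CARD('a) = 1" by linarith
  then obtain x0 :: 'a where U: "UNIV = {x0}" by (metis card_1_singletonE)
  have "pmf P x0 = 1" for P :: "'a pmf"
  proof -
    have h: "sum (pmf P) UNIV = 1" using sum_pmf_eq_1[of UNIV P] by simp
    have "sum (pmf P) {x0} = 1" using h U by metis
    then show ?thesis by simp
  qed
  then have "pmf P0 x = pmf P1 x" for x using U by (metis UNIV_I singletonD)
  then have "P0 = P1" by (rule pmf_eqI)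
  then show False using assms by simp
qed

lemma sum_shift_aux:
  fixes f :: "nat \<Rightarrow> real"
  shows "(\<Sum>j<m. f (a + j)) = (\<Sum>i=a..<a+m. f i)"
  using sum.shift_bounds_nat_ivl[of f 0 a m] by (simp add: lessThan_atLeast0 add.commute)

lemma sum_split_aux:
  fixes f :: "nat \<Rightarrow> real"
  assumes "a \<le> b" "b \<le> Suc n"
  shows "(\<Sum>i=a..n. f i) = (\<Sum>i=a..<b. f i) + (\<Sum>i=b..n. f i)"
  using sum.atLeastLessThan_concat[of a b "Suc n" f] assms
  by (simp add: atLeastLessThanSuc_atLeastAtMost)

lemma prob_bound:
  fixes P0 P1 :: "'a::finite pmf" and eps :: real and n kstar alpha :: nat
    and khat :: "(nat \<Rightarrow> 'a) \<Rightarrow> nat"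
  assumes eps: "eps > 0"
    and kstar: "1 < kstar" "kstar \<le> n"
    and khat_argmax: "\<And>y. khat y \<in> {1..n} \<and>
        (\<forall>k\<in>{1..n}. rr_stat eps P0 P1 n y k \<le> rr_stat eps P0 P1 n y (khat y))"
    and BC1: "(\<Sum>y\<in>UNIV. sqrt (rr_Q eps P0 y * rr_Q eps P1 y)) \<le> 1"
  shows "measure_pmf.prob (rr_data eps P0 P1 n kstar)
              {\<omega>. \<bar>int (khat (snd \<circ> \<omega>)) - int kstar\<bar> > int alpha}
         \<le> 2 * (\<Sum>y\<in>UNIV. sqrt (rr_Q eps P0 y * rr_Q eps P1 y)) ^ alpha"
proof -
  define Q0 where "Q0 = rr_Q eps P0"
  define Q1 where "Q1 = rr_Q eps P1"
  define Lf where "Lf = (\<lambda>z. ln (Q1 z / Q0 z))"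
  define BC where "BC = (\<Sum>y\<in>UNIV. sqrt (Q0 y * Q1 y))"
  define pY where "pY = (\<lambda>i. bind_pmf (if i < kstar then P0 else P1) (rr_pmf eps))"
  define Y where "Y = Pi_pmf {1..n} (snd (undefined :: 'a \<times> 'a)) pY"
  define E where "E = {y. \<bar>int (khat y) - int kstar\<bar> > int alpha}"
  define Zp where "Zp = (\<lambda>z. exp (- Lf z / 2))"
  define Zm where "Zm = (\<lambda>z. exp (Lf z / 2))"
  define isP where "isP = [kstar..<Suc n]"
  define isM where "isM = rev [1..<kstar]"
  define Ep where "Ep = {f. \<exists>m. alpha \<le> m \<and> m \<le> length isP \<and> 1 \<le> 1 * (\<Prod>j<m. Zp (f (isP!j)))}"
  define Em where "Em = {f. \<exists>m. alpha \<le> m \<and> m \<le> length isM \<and> 1 \<le> 1 * (\<Prod>j<m. Zm (f (isM!j)))}"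
  have Q0pos: "Q0 z > 0" for z unfolding Q0_def by (rule rr_Q_pos[OF eps])
  have Q1pos: "Q1 z > 0" for z unfolding Q1_def by (rule rr_Q_pos[OF eps])
  have BCnn: "0 \<le> BC" unfolding BC_def
    by (intro sum_nonneg real_sqrt_ge_zero mult_nonneg_nonneg less_imp_le Q0pos Q1pos)
  have BC1': "BC \<le> 1" using BC1 by (simp add: BC_def Q0_def Q1_def)
  have pmfY: "pmf (pY i) z = (if i < kstar then Q0 z else Q1 z)" for i z
    by (simp add: pY_def pmf_Qp[OF eps] Q0_def Q1_def)
  have stat: "rr_stat eps P0 P1 n y j = (\<Sum>i=j..n. Lf (y i))" for y j
    by (simp add: rr_stat_def Lf_def Q0_def Q1_def)
  have Yeq: "map_pmf (\<lambda>\<omega>. snd \<circ> \<omega>) (rr_data eps P0 P1 n kstar) = Y"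
    unfolding Y_def pY_def by (rule data_snd)
  have "{\<omega>. \<bar>int (khat (snd \<circ> \<omega>)) - int kstar\<bar> > int alpha} = (\<lambda>\<omega>. snd \<circ> \<omega>) -` E"
    by (auto simp: E_def)
  then have p1: "measure_pmf.prob (rr_data eps P0 P1 n kstar)
              {\<omega>. \<bar>int (khat (snd \<circ> \<omega>)) - int kstar\<bar> > int alpha} = measure_pmf.prob Y E"
    unfolding Yeq[symmetric] measure_map_pmf by (rule arg_cong)
  have sub: "E \<subseteq> Ep \<union> Em"
  proof
    fix y assume yE: "y \<in> E"
    define k where "k = khat y"
    have k: "1 \<le> k" "k \<le> n" using khat_argmax[of y] by (auto simp: k_def)
    have ks: "(\<Sum>i=kstar..n. Lf (y i)) \<le> (\<Sum>i=k..n. Lf (y i))"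
      using khat_argmax[of y] kstar by (auto simp: k_def stat)
    have "\<bar>int k - int kstar\<bar> > int alpha" using yE by (simp add: E_def k_def)
    then have "k > kstar + alpha \<or> k + alpha < kstar" by linarith
    then show "y \<in> Ep \<union> Em"
    proof
      assume kg: "k > kstar + alpha"
      define m where "m = k - kstar"
      have neg: "(\<Sum>i=kstar..<k. Lf (y i)) \<le> 0"
        using ks sum_split_aux[of kstar k n "\<lambda>i. Lf (y i)"] kg k by simp
      have "(\<Prod>j<m. Zp (y (isP!j))) = (\<Prod>j<m. exp (- Lf (y (kstar + j)) / 2))"
      proof (rule prod.cong)
        fix j assume "j \<in> {..<m}"
        then have "kstar + j < Suc n" using k kg by (simp add: m_def)
        then show "Zp (y (isP!j)) = exp (- Lf (y (kstar + j)) / 2)"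
          by (simp add: isP_def Zp_def del: upt_Suc)
      qed simp
      also have "\<dots> = exp (\<Sum>j<m. - Lf (y (kstar + j)) / 2)" by (simp add: exp_sum)
      also have "(\<Sum>j<m. - Lf (y (kstar + j)) / 2) = - (\<Sum>j<m. Lf (y (kstar + j))) / 2"
        by (simp add: sum_negf sum_divide_distrib)
      also have "(\<Sum>j<m. Lf (y (kstar + j))) = (\<Sum>i=kstar..<k. Lf (y i))"
        using sum_shift_aux[of "\<lambda>i. Lf (y i)" kstar m] kg by (simp add: m_def)
      finally have "(\<Prod>j<m. Zp (y (isP!j))) \<ge> 1" using neg by simp
      moreover have "alpha \<le> m" "m \<le> length isP" using kg k by (auto simp: m_def isP_def)
      ultimately show "y \<in> Ep \<union> Em" by (auto simp: Ep_def)
    next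
      assume kl: "k + alpha < kstar"
      define m where "m = kstar - k"
      have pos: "(\<Sum>i=k..<kstar. Lf (y i)) \<ge> 0"
        using ks sum_split_aux[of k kstar n "\<lambda>i. Lf (y i)"] kl kstar by simp
      have "(\<Prod>j<m. Zm (y (isM!j))) = (\<Prod>j<m. exp (Lf (y (k + (m - Suc j))) / 2))"
      proof (rule prod.cong)
        fix j assume "j \<in> {..<m}"
        then have j: "j < m" by simp
        then have "j < kstar - 1" using k kl by (simp add: m_def)
        then have "isM ! j = [1..<kstar] ! (kstar - 1 - Suc j)" by (simp add: isM_def rev_nth)
        also have "\<dots> = 1 + (kstar - 1 - Suc j)" using j k kl by (simp add: m_def)
        also have "\<dots> = k + (m - Suc j)" using j k kl by (simp add: m_def)
        finally show "Zm (y (isM!j)) = exp (Lf (y (k + (m - Suc j))) / 2)"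
          by (simp add: Zm_def)
      qed simp
      also have "\<dots> = exp (\<Sum>j<m. Lf (y (k + (m - Suc j))) / 2)" by (simp add: exp_sum)
      also have "(\<Sum>j<m. Lf (y (k + (m - Suc j))) / 2) = (\<Sum>j<m. Lf (y (k + j))) / 2"
        using sum.nat_diff_reindex[of "\<lambda>j. Lf (y (k + j)) / 2" m] by (simp add: sum_divide_distrib)
      also have "(\<Sum>j<m. Lf (y (k + j))) = (\<Sum>i=k..<kstar. Lf (y i))"
        using sum_shift_aux[of "\<lambda>i. Lf (y i)" k m] kl by (simp add: m_def)
      finally have "(\<Prod>j<m. Zm (y (isM!j))) \<ge> 1" using pos by simp
      moreover have "alpha \<le> m" "m \<le> length isM" using kl k by (auto simp: m_def isM_def)
      ultimately show "y \<in> Ep \<union> Em" by (auto simp: Em_def)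
    qed
  qed
  have EZp: "(\<Sum>z\<in>UNIV. pmf (pY i) z * Zp z) \<le> BC" if "i \<in> set isP" for i
  proof -
    have "\<not> i < kstar" using that by (auto simp: isP_def)
    then have "(\<Sum>z\<in>UNIV. pmf (pY i) z * Zp z) = (\<Sum>z\<in>UNIV. Q1 z * exp (- (ln (Q1 z / Q0 z)) / 2))"
      by (simp add: pmfY Zp_def Lf_def)
    also have "\<dots> = BC" unfolding BC_def
      by (intro sum.cong refl sqrt_aux(1) Q0pos Q1pos)
    finally show ?thesis by simp
  qed
  have EZm: "(\<Sum>z\<in>UNIV. pmf (pY i) z * Zm z) \<le> BC" if "i \<in> set isM" for i
  proof -
    have "i < kstar" using that by (simp add: isM_def)
    then have "(\<Sum>z\<in>UNIV. pmf (pY i) z * Zm z) = (\<Sum>z\<in>UNIV. Q0 z * exp (ln (Q1 z / Q0 z) / 2))"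
      by (simp add: pmfY Zm_def Lf_def)
    also have "\<dots> = BC" unfolding BC_def
      by (intro sum.cong refl sqrt_aux(2) Q0pos Q1pos)
    finally show ?thesis by simp
  qed
  have bp: "measure_pmf.prob Y Ep \<le> 1 * BC ^ alpha"
    unfolding Y_def Ep_def
    by (rule ville[where Z=Zp]) (use EZp BCnn BC1' kstar in \<open>auto simp: Zp_def isP_def\<close>)
  have bm: "measure_pmf.prob Y Em \<le> 1 * BC ^ alpha"
    unfolding Y_def Em_def
    by (rule ville[where Z=Zm]) (use EZm BCnn BC1' kstar in \<open>auto simp: Zm_def isM_def\<close>)
  have "measure_pmf.prob Y E \<le> measure_pmf.prob Y (Ep \<union> Em)"
    by (rule measure_pmf.finite_measure_mono[OF sub]) simp
  also have "\<dots> \<le> measure_pmf.prob Y Ep + measure_pmf.prob Y Em"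
    by (rule measure_subadditive) (auto simp: measure_pmf.emeasure_eq_measure)
  also have "\<dots> \<le> 2 * BC ^ alpha" using bp bm by simp
  finally show ?thesis using p1 by (simp add: BC_def Q0_def Q1_def)
qed

theorem corollary5p7:
  fixes P0 P1 :: "'a::finite pmf" and eps :: real and n kstar alpha :: nat
    and khat :: "(nat \<Rightarrow> 'a) \<Rightarrow> nat"
  assumes supp0: "set_pmf P0 = UNIV" and supp1: "set_pmf P1 = UNIV"
    and neq: "P0 \<noteq> P1"
    and eps: "eps > 0" and n: "n > 1"
    and kstar: "1 < kstar" "kstar \<le> n"
    and alpha: "alpha \<in> {1..n}"
    and khat_argmax: "\<And>y. khat y \<in> {1..n} \<and>
        (\<forall>k\<in>{1..n}. rr_stat eps P0 P1 n y k \<le> rr_stat eps P0 P1 n y (khat y))"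
  shows "let q = real CARD('a);
             s = llr_range P0 P1;
             C = 2 * ((exp eps - 1) / (exp eps + q - 1))^2 * (tv_dist P0 P1)^2;
             s_r = min (2 * eps) (tanh (eps / 2) * s);
             t = exp (- real alpha * C^2 / s_r^2);
             M = (n - 1) div alpha
         in measure_pmf.prob (rr_data eps P0 P1 n kstar)
              {\<omega>. \<bar>int (khat (snd \<circ> \<omega>)) - int kstar\<bar> > int alpha}
            \<le> 2 * min (t * (1 - t ^ M) / (1 - t)) ((1 - C / 2) powr (real alpha / 2))"
proof -
  define q where "q = real CARD('a)"
  define s where "s = llr_range P0 P1"
  define C where "C = 2 * ((exp eps - 1) / (exp eps + q - 1))^2 * (tv_dist P0 P1)^2"
  define s_r where "s_r = min (2 * eps) (tanh (eps / 2) * s)"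
  define t where "t = exp (- real alpha * C^2 / s_r^2)"
  define M where "M = (n - 1) div alpha"
  define Pr where "Pr = measure_pmf.prob (rr_data eps P0 P1 n kstar)
              {\<omega>. \<bar>int (khat (snd \<circ> \<omega>)) - int kstar\<bar> > int alpha}"
  define B where "B = (1 - C / 2) powr (real alpha / 2)"
  define A where "A = t * (1 - t ^ M) / (1 - t)"
  define kap where "kap = (exp eps - 1) / (exp eps + q - 1)"
  define d where "d = tv_dist P0 P1"
  define BC where "BC = (\<Sum>y\<in>UNIV. sqrt (rr_Q eps P0 y * rr_Q eps P1 y))"
  define T where "T = (1/2) * (\<Sum>y\<in>UNIV. \<bar>rr_Q eps P0 y - rr_Q eps P1 y\<bar>)"
  have q2: "q \<ge> 2" using card_ge2[OF neq] by (simp add: q_def)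
  have e1: "exp eps > 1" using eps by simp
  have Dpos: "exp eps + q - 1 > 0" using q2 e1 by linarith
  have kap0: "kap > 0" using e1 Dpos by (simp add: kap_def)
  have kap_tanh: "kap \<le> tanh (eps / 2)"
  proof -
    have "kap \<le> (exp eps - 1) / (exp eps + 1)"
      unfolding kap_def using e1 q2 Dpos by (intro divide_left_mono) (auto intro!: mult_pos_pos add_pos_pos)
    then show ?thesis by (simp add: tanh_half)
  qed
  have tanh_le: "tanh (eps / 2) \<le> eps / 2"
    using tanh_half_le[of eps] eps by (simp add: tanh_half)
  have d0: "d \<ge> 0" unfolding d_def tv_dist_def by (simp add: sum_nonneg)
  have d1: "d \<le> 1"
  proof -
    have "d = (\<Sum>x\<in>{x. pmf P0 x < pmf P1 x}. pmf P1 x - pmf P0 x)" unfolding d_def by (rule tv_split(1))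
    also have "\<dots> \<le> (\<Sum>x\<in>{x. pmf P0 x < pmf P1 x}. pmf P1 x)" by (intro sum_mono) simp
    also have "\<dots> \<le> (\<Sum>x\<in>UNIV. pmf P1 x)" by (intro sum_mono2) auto
    also have "\<dots> = 1" by (simp add: sum_pmf_eq_1)
    finally show ?thesis .
  qed
  have dpos: "d > 0"
  proof (rule ccontr)
    assume "\<not> d > 0"
    moreover have "(\<Sum>x\<in>UNIV. \<bar>pmf P0 x - pmf P1 x\<bar>) \<ge> 0" by (simp add: sum_nonneg)
    ultimately have "(\<Sum>x\<in>UNIV. \<bar>pmf P0 x - pmf P1 x\<bar>) = 0" by (simp add: d_def tv_dist_def)
    then have "\<forall>x\<in>UNIV. \<bar>pmf P0 x - pmf P1 x\<bar> = 0" by (subst (asm) sum_nonneg_eq_0_iff) auto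
    then have "P0 = P1" by (intro pmf_eqI) simp
    then show False using neq by simp
  qed
  have Qdiff: "rr_Q eps P0 y - rr_Q eps P1 y = kap * (pmf P0 y - pmf P1 y)" for y
    using Dpos by (simp add: rr_Q_formula[OF eps] kap_def q_def diff_divide_distrib[symmetric] algebra_simps)
  have Tkd: "T = kap * d"
  proof -
    have "T = (1/2) * (\<Sum>y\<in>UNIV. kap * \<bar>pmf P0 y - pmf P1 y\<bar>)"
      unfolding T_def Qdiff using kap0 by (simp add: abs_mult)
    then show ?thesis by (simp add: d_def tv_dist_def sum_distrib_left[symmetric])
  qed
  have CT: "C = 2 * T^2" by (simp add: C_def Tkd kap_def d_def power_mult_distrib power_divide)
  have sumQ: "sum (rr_Q eps P) UNIV = 1" for P :: "'a pmf"
    using sum_pmf_eq_1[of UNIV "bind_pmf P (rr_pmf eps)"] by (simp add: pmf_Qp[OF eps])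
  have Qpos: "rr_Q eps P y > 0" for P y by (rule rr_Q_pos[OF eps])
  have bc: "BC^2 \<le> 1 - T^2" unfolding BC_def T_def
    by (rule bc_tv) (auto simp: sumQ less_imp_le[OF Qpos])
  have BCpos: "BC > 0" unfolding BC_def
    by (intro sum_pos) (auto intro!: mult_pos_pos Qpos)
  have BC1: "BC \<le> 1"
  proof -
    have "BC^2 \<le> 1^2" using bc by (simp add: add_increasing2) (smt (verit) zero_le_power2)
    then show ?thesis by (rule power2_le_imp_le) simp
  qed
  have main1: "Pr \<le> 2 * BC ^ alpha"
    unfolding Pr_def BC_def
    by (rule prob_bound[OF eps kstar khat_argmax]) (use BC1 in \<open>simp add: BC_def\<close>)
  have CB: "1 - C / 2 = 1 - T^2" by (simp add: CT)
  have BCB: "BC ^ alpha \<le> B"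
  proof -
    have "BC ^ alpha = BC powr (real alpha)" using BCpos by (simp add: powr_realpow)
    also have "\<dots> = (BC powr 2) powr (real alpha / 2)" by (simp add: powr_powr)
    also have "\<dots> = (BC^2) powr (real alpha / 2)" using BCpos by (simp add: powr_numeral)
    also have "\<dots> \<le> (1 - T^2) powr (real alpha / 2)"
      by (rule powr_mono2) (use bc in auto)
    finally show ?thesis by (simp add: B_def CB)
  qed
  have B0: "B \<ge> 0" by (simp add: B_def)
  show ?thesis
  proof (cases "alpha = n")
    case True
    have "{\<omega> :: nat \<Rightarrow> 'a \<times> 'a. \<bar>int (khat (snd \<circ> \<omega>)) - int kstar\<bar> > int alpha} = {}"
    proof -
      have "\<bar>int (khat y) - int kstar\<bar> \<le> int alpha" for y
        using khat_argmax[of y] kstar True by auto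
      then show ?thesis by (auto simp: not_less[symmetric])
    qed
    then have "Pr = 0" unfolding Pr_def by simp
    moreover have "M = 0" using True n by (simp add: M_def)
    ultimately have "Pr \<le> 2 * min A B" using B0 by (simp add: A_def)
    then show ?thesis unfolding Let_def A_def B_def Pr_def t_def M_def s_r_def C_def s_def q_def .
  next
    case False
    then have an: "alpha < n" using alpha by simp
    have M1: "M \<ge> 1" using an alpha by (simp add: M_def div_greater_zero_iff Suc_le_eq)
    have "4 * kap * d \<le> 2 * eps"
    proof -
      have "kap * d \<le> kap" using d1 kap0 by (simp add: mult_left_le)
      then show ?thesis using kap_tanh tanh_le by (simp add: mult.commute)
    qed
    moreover have "4 * kap * d \<le> tanh (eps / 2) * s"
    proof -
      have "4 * d \<le> s" unfolding s_def d_def by (rule llr_tv[OF supp0 supp1])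
      then have "kap * (4 * d) \<le> tanh (eps / 2) * s"
        by (rule mult_mono[OF kap_tanh]) (use kap0 kap_tanh d0 eps in auto)
      then show ?thesis by (simp add: mult_ac)
    qed
    ultimately have sr: "4 * kap * d \<le> s_r" by (simp add: s_r_def)
    have kd: "4 * kap * d > 0" using kap0 dpos by simp
    have srpos: "s_r > 0" using sr kd by linarith
    have Cpos: "C > 0" using CT Tkd kap0 dpos by simp
    have C4: "4 * C \<le> s_r^2"
    proof -
      have "4 * C = 8 * (kap * d)^2" by (simp add: CT Tkd)
      also have "\<dots> \<le> (4 * kap * d)^2" by (simp add: power2_eq_square)
          (use kap0 d0 in \<open>simp add: mult_nonneg_nonneg\<close>)
      also have "\<dots> \<le> s_r^2" by (rule power_mono[OF sr]) (use kd in simp)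
      finally show ?thesis .
    qed
    have ratio: "C^2 / s_r^2 \<le> C / 4"
      using C4 Cpos srpos by (simp add: divide_simps power2_eq_square mult_left_mono)
    have t1: "t < 1"
    proof -
      have "real alpha * C^2 / s_r^2 > 0" using alpha Cpos srpos by simp
      then show ?thesis by (simp add: t_def)
    qed
    have t0: "t > 0" by (simp add: t_def)
    have tA: "t \<le> A"
    proof -
      have "t ^ M \<le> t ^ 1" by (rule power_decreasing[OF M1]) (use t0 t1 in auto)
      then have "1 - t \<le> 1 - t ^ M" by simp
      then have "1 \<le> (1 - t ^ M) / (1 - t)" using t1 by simp
      then have "t * 1 \<le> t * ((1 - t ^ M) / (1 - t))" by (rule mult_left_mono) (use t0 in simp)
      then show ?thesis by (simp add: A_def)
    qed
    have Bt: "B \<le> t"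
    proof -
      have base: "1 - C / 2 > 0" using CB bc BCpos by (smt (verit) zero_less_power)
      have "B = exp (real alpha / 2 * ln (1 - C / 2))" using base by (simp add: B_def powr_def)
      also have "\<dots> \<le> exp (real alpha / 2 * (- C / 2))"
      proof -
        have "ln (1 - C / 2) \<le> - C / 2" using ln_le_minus_one[OF base] by simp
        then have "real alpha / 2 * ln (1 - C / 2) \<le> real alpha / 2 * (- C / 2)"
          by (rule mult_left_mono) simp
        then show ?thesis by (simp only: exp_le_cancel_iff)
      qed
      also have "\<dots> \<le> t"
      proof -
        have "real alpha * (C^2 / s_r^2) \<le> real alpha * (C / 4)" by (rule mult_left_mono[OF ratio]) simp
        then show ?thesis by (simp add: t_def)
      qed
      finally show ?thesis .
    qed
    have "Pr \<le> 2 * min A B" using main1 BCB Bt tA by simp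
    then show ?thesis unfolding Let_def A_def B_def Pr_def t_def M_def s_r_def C_def s_def q_def .
  qed
qed
end
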